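(* Under the multi-view latent factor model described in the context, let $\eta(x)=\mathbb{P}(Y=1\mid X=x)$ be the regression function of the label on a single view, and let $f^\ast(x)=1$ if $\eta(x)\ge 1/2$ and $f^\ast(x)=-1$ otherwise be the Bayes classification rule. Then there exist functions $\tilde\eta$ and $\tilde f^\ast$ on $\mathbb{R}^K$ such that $\eta(x)=\tilde\eta(U^Tx)$ and $f^\ast(x)=\tilde f^\ast(U^Tx)$ for all $x$.
   Context: Multi-view latent factor model: a sample consists of a latent vector $Z\in\mathbb{R}^K$, a label $Y\in\{-1,1\}$, and views $X\in\mathbb{R}^d$. The pair $(Z,Y)$ is drawn from a distribution $\pi(Z,Y)$ such that the conditional distribution of $Z$ given $Y$ has a density. Given $Z$, the views are drawn independently from a continuous conditional distribution $f(X\mid Z)$ of factor form $X=BZ+\epsilon$, where $B=(b_1,\dots,b_K)\in\mathbb{R}^{d\times K}$, $\epsilon$ is a mean-zero random vector independent of $Z$ (independent across views and samples), $B^TB=\Lambda=\mathrm{diag}(\lambda_1,\dots,\lambda_K)$ with $\lambda_1\ge\dots\ge\lambda_K>0$, $\mathrm{Var}(Z)=I_K$, and $(I_d-B(B^TB)^{-1}B^T)\epsilon$ is independent of $B^T\epsilon$. The label $Y$ is conditionally independent of the views given $Z$. Write $U=B\Lambda^{-1/2}$. *)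

theory Defs
  imports "HOL-Probability.Probability"
begin

definition indep_rv ::
  "'a measure \<Rightarrow> ('a \<Rightarrow> 'b::topological_space) \<Rightarrow> ('a \<Rightarrow> 'c::topological_space) \<Rightarrow> bool" where
  "indep_rv M X1 X2 \<longleftrightarrow>
     (\<forall>A \<in> sets borel. \<forall>C \<in> sets borel.
        measure M {\<omega>\<in>space M. X1 \<omega> \<in> A \<and> X2 \<omega> \<in> C}
        = measure M {\<omega>\<in>space M. X1 \<omega> \<in> A} * measure M {\<omega>\<in>space M. X2 \<omega> \<in> C})"

definition cond_indep_given ::
  "'a measure \<Rightarrow> ('a \<Rightarrow> 'b::topological_space) \<Rightarrow> ('a \<Rightarrow> 'c::topological_space)
     \<Rightarrow> ('a \<Rightarrow> 'e::topological_space) \<Rightarrow> bool" where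
  "cond_indep_given M Y X Z \<longleftrightarrow>
     (\<forall>A \<in> sets borel. \<forall>C \<in> sets borel.
        AE \<omega> in M.
          real_cond_exp M (vimage_algebra (space M) Z borel)
              (\<lambda>\<omega>. indicator A (Y \<omega>) * indicator C (X \<omega>)) \<omega>
          = real_cond_exp M (vimage_algebra (space M) Z borel) (\<lambda>\<omega>. indicator A (Y \<omega>)) \<omega>
            * real_cond_exp M (vimage_algebra (space M) Z borel) (\<lambda>\<omega>. indicator C (X \<omega>)) \<omega>)"

text \<open>A (version of the) regression function eta(x) = P(Y = 1 | X = x):
  a Borel function eta with eta(X) = E[1{Y=1} | sigma(X)] almost surely.\<close>
definition is_regression_fn ::
  "'a measure \<Rightarrow> ('a \<Rightarrow> real) \<Rightarrow> ('a \<Rightarrow> 'c::topological_space) \<Rightarrow> ('c \<Rightarrow> real) \<Rightarrow> bool" where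
  "is_regression_fn M Y X eta \<longleftrightarrow>
     eta \<in> borel_measurable borel \<and>
     (AE \<omega> in M. eta (X \<omega>) =
        real_cond_exp M (vimage_algebra (space M) X borel)
          (\<lambda>\<omega>. if Y \<omega> = 1 then 1 else 0) \<omega>)"

definition bayes_rule :: "('c \<Rightarrow> real) \<Rightarrow> 'c \<Rightarrow> real" where
  "bayes_rule eta x = (if eta x \<ge> 1/2 then 1 else -1)"

end

theory Submission
  imports Defs
begin

lemma dynkin_set_integral_eq:
  fixes f g :: "'a \<Rightarrow> real"
  assumes f: "integrable M f" and g: "integrable M g"
    and G: "Int_stable G" "G \<subseteq> sets M"
    and sp: "(\<integral>x \<in> space M. f x \<partial>M) = (\<integral>x \<in> space M. g x \<partial>M)"
    and eq: "\<And>a. a \<in> G \<Longrightarrow> (\<integral>x \<in> a. f x \<partial>M) = (\<integral>x \<in> a. g x \<partial>M)"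
    and A: "A \<in> sigma_sets (space M) G"
  shows "(\<integral>x \<in> A. f x \<partial>M) = (\<integral>x \<in> A. g x \<partial>M)"
proof -
  have Gp: "G \<subseteq> Pow (space M)" using G(2) sets.sets_into_space by blast
  have ss: "sigma_sets (space M) G \<subseteq> sets M" using G(2) by (simp add: sets.sigma_sets_subset)
  have si: "\<And>h B. integrable M h \<Longrightarrow> B \<in> sets M \<Longrightarrow> set_integrable M B (h::'a\<Rightarrow>real)"
    unfolding set_integrable_def by (rule integrable_mult_indicator)
  from G(1) Gp A show ?thesis
  proof (induction rule: sigma_sets_induct_disjoint)
    case (basic A) then show ?case using eq by blast
  next
    case empty then show ?case by (simp add: set_lebesgue_integral_def)
  next
    case (compl A)
    have As: "A \<in> sets M" using compl(1) ss by blast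
    have d: "space M - A \<in> sets M" using As by blast
    have u: "space M = A \<union> (space M - A)" using As sets.sets_into_space by blast
    have "\<And>h. integrable M h \<Longrightarrow> (\<integral>x \<in> space M - A. h x \<partial>M) = (\<integral>x \<in> space M. h x \<partial>M) - (\<integral>x \<in> A. (h::'a\<Rightarrow>real) x \<partial>M)"
    proof -
      fix h :: "'a \<Rightarrow> real" assume h: "integrable M h"
      have "(\<integral>x \<in> space M. h x \<partial>M) = (\<integral>x \<in> A \<union> (space M - A). h x \<partial>M)" using u by simp
      also have "\<dots> = (\<integral>x \<in> A. h x \<partial>M) + (\<integral>x \<in> space M - A. h x \<partial>M)"
        by (rule set_integral_Un) (auto intro: si[OF h] As d)
      finally show "(\<integral>x \<in> space M - A. h x \<partial>M) = (\<integral>x \<in> space M. h x \<partial>M) - (\<integral>x \<in> A. h x \<partial>M)" by simp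
    qed
    then show ?case using f g sp compl(2) by simp
  next
    case (union A)
    have As: "\<And>i. A i \<in> sets M" using union(2) ss by blast
    have dj: "\<And>i j. i \<noteq> j \<Longrightarrow> A i \<inter> A j = {}" using union(1) unfolding disjoint_family_on_def by blast
    have U: "(\<Union>i. A i) \<in> sets M" using As by blast
    have "(\<integral>x \<in> (\<Union>i. A i). f x \<partial>M) = (\<Sum>i. (\<integral>x \<in> A i. f x \<partial>M))"
      by (rule lebesgue_integral_countable_add[OF As dj si[OF f U]])
    also have "\<dots> = (\<Sum>i. (\<integral>x \<in> A i. g x \<partial>M))" using union(3) by simp
    also have "\<dots> = (\<integral>x \<in> (\<Union>i. A i). g x \<partial>M)"
      by (rule lebesgue_integral_countable_add[OF As dj si[OF g U], symmetric])
    finally show ?case .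
  qed
qed


lemma mv_meas[measurable]: "(\<lambda>x. (A::real^'n::finite^'m::finite) *v x) \<in> borel_measurable borel"
  by (rule borel_measurable_continuous_onI) (rule matrix_vector_mult_linear_continuous_on)

lemma (in prob_space) int_bound1:
  fixes p h :: "'a \<Rightarrow> real"
  assumes "integrable M p" "h \<in> borel_measurable M" "\<And>\<omega>. \<bar>h \<omega>\<bar> \<le> 1"
  shows "integrable M (\<lambda>\<omega>. h \<omega> * p \<omega>)"
proof (rule Bochner_Integration.integrable_bound[OF assms(1)])
  show "(\<lambda>\<omega>. h \<omega> * p \<omega>) \<in> borel_measurable M" using assms(1,2) by measurable
  show "AE x in M. norm (h x * p x) \<le> norm (p x)"
    using assms(3) by (auto simp: abs_mult intro!: mult_left_le_one_le)
qed

lemma (in prob_space) int_ind: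
  fixes h :: "'a \<Rightarrow> real"
  assumes "h \<in> borel_measurable M" "\<And>\<omega>. \<bar>h \<omega>\<bar> \<le> 1"
  shows "integrable M h"
  using integrable_const_bound[of h 1] assms by auto

lemma (in prob_space) stepA:
  fixes Z :: "'a \<Rightarrow> real ^ 'k::finite" and Y :: "'a \<Rightarrow> real"
    and eps X :: "'a \<Rightarrow> real ^ 'd::finite" and B :: "real^'k^'d"
  assumes Zm[measurable]: "Z \<in> borel_measurable M" and Ym[measurable]: "Y \<in> borel_measurable M"
    and em[measurable]: "eps \<in> borel_measurable M" and Xm[measurable]: "X \<in> borel_measurable M"
    and ind: "indep_rv M eps Z" and Xd: "\<forall>\<omega>\<in>space M. X \<omega> = B *v Z \<omega> + eps \<omega>"
    and ci: "cond_indep_given M Y X Z"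
    and A[measurable]: "A \<in> sets borel" and D[measurable]: "D \<in> sets borel" and E[measurable]: "E \<in> sets borel"
  shows "prob {\<omega>\<in>space M. Y \<omega> \<in> A \<and> Z \<omega> \<in> D \<and> eps \<omega> \<in> E}
       = prob {\<omega>\<in>space M. Y \<omega> \<in> A \<and> Z \<omega> \<in> D} * prob {\<omega>\<in>space M. eps \<omega> \<in> E}"
proof -
  define Fz where "Fz = vimage_algebra (space M) Z borel"
  have sFz: "sets Fz = {Z -` A \<inter> space M | A. A \<in> sets borel}"
    unfolding Fz_def by (rule sets_vimage_algebra2) simp
  have subFz: "subalgebra M Fz" unfolding subalgebra_def
    using sFz measurable_sets[OF Zm] by (auto simp: Fz_def)
  interpret Fz: sigma_finite_subalgebra M Fz
    using finite_measure_subalgebra_is_sigma_finite[of M Fz] subFz finite_measure_axioms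
    unfolding finite_measure_subalgebra_def finite_measure_subalgebra_axioms_def by blast
  have ZF[measurable]: "Z \<in> measurable Fz borel" unfolding Fz_def by (rule measurable_vimage_algebra1) simp
  define pA where "pA = real_cond_exp M Fz (\<lambda>\<omega>. indicator A (Y \<omega>))"
  have pAF[measurable]: "pA \<in> borel_measurable Fz" "pA \<in> borel_measurable M" unfolding pA_def by simp_all
  have intA: "integrable M (\<lambda>\<omega>. indicator A (Y \<omega>)::real)"
    by (rule int_ind) (auto split: split_indicator)
  have pAint: "integrable M pA" unfolding pA_def by (rule Fz.real_cond_exp_int(1)[OF intA])
  define RXZ where "RXZ = {{\<omega>\<in>space M. X \<omega> \<in> C \<and> Z \<omega> \<in> D} | C D. C \<in> sets borel \<and> D \<in> sets borel}"
  have rect: "(\<integral>\<omega>\<in>G. indicator A (Y \<omega>) \<partial>M) = (\<integral>\<omega>\<in>G. pA \<omega> \<partial>M)" if "G \<in> RXZ" for G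
  proof -
    obtain C D where C[measurable]: "C \<in> sets borel" and D[measurable]: "D \<in> sets borel"
      and G: "G = {\<omega>\<in>space M. X \<omega> \<in> C \<and> Z \<omega> \<in> D}" using \<open>G \<in> RXZ\<close> unfolding RXZ_def by blast
    define IZ where "IZ = Z -` D \<inter> space M"
    have IZF[measurable]: "IZ \<in> sets Fz" using sFz D unfolding IZ_def by blast
    have IZM[measurable]: "IZ \<in> sets M" unfolding IZ_def by (rule measurable_sets[OF Zm D])
    define qC where "qC = real_cond_exp M Fz (\<lambda>\<omega>. indicator C (X \<omega>))"
    define rAC where "rAC = real_cond_exp M Fz (\<lambda>\<omega>. indicator A (Y \<omega>) * (indicator C (X \<omega>)::real))"
    have ciAC: "AE \<omega> in M. rAC \<omega> = pA \<omega> * qC \<omega>"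
      using ci A C unfolding cond_indep_given_def rAC_def pA_def qC_def Fz_def by blast
    have "(\<integral>\<omega>\<in>G. indicator A (Y \<omega>) \<partial>M) = (\<integral>\<omega>\<in>IZ. indicator A (Y \<omega>) * (indicator C (X \<omega>)::real) \<partial>M)"
      unfolding set_lebesgue_integral_def IZ_def G by (rule Bochner_Integration.integral_cong) (auto split: split_indicator)
    also have "\<dots> = (\<integral>\<omega>\<in>IZ. rAC \<omega> \<partial>M)" unfolding rAC_def
      by (rule Fz.real_cond_exp_intA[OF _ IZF]) (rule int_ind, auto split: split_indicator)
    also have "\<dots> = (\<integral>\<omega>\<in>IZ. pA \<omega> * qC \<omega> \<partial>M)" unfolding set_lebesgue_integral_def
      by (rule integral_cong_AE) (use ciAC in \<open>auto simp: rAC_def qC_def\<close>)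
    also have "\<dots> = (\<integral>\<omega>. (indicator IZ \<omega> * pA \<omega>) * qC \<omega> \<partial>M)"
      unfolding set_lebesgue_integral_def by (simp add: mult.assoc)
    also have "\<dots> = (\<integral>\<omega>. (indicator IZ \<omega> * pA \<omega>) * indicator C (X \<omega>) \<partial>M)" unfolding qC_def
    proof (rule Fz.real_cond_exp_intg(2))
      show "integrable M (\<lambda>x. indicator IZ x * pA x * indicator C (X x))"
        using int_bound1[OF pAint, of "\<lambda>x. indicator IZ x * indicator C (X x)"]
        by (auto simp: mult_ac split: split_indicator)
    qed simp_all
    also have "\<dots> = (\<integral>\<omega>\<in>G. pA \<omega> \<partial>M)"
      unfolding set_lebesgue_integral_def IZ_def G by (rule Bochner_Integration.integral_cong) (auto split: split_indicator)
    finally show ?thesis .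
  qed
  have RXZM: "RXZ \<subseteq> sets M" unfolding RXZ_def by auto
  have RXZs: "Int_stable RXZ" unfolding Int_stable_def RXZ_def
  proof safe
    fix C1 C2 :: "(real^'d) set" and D1 D2 :: "(real^'k) set" assume "C1 \<in> sets borel" "D1 \<in> sets borel" "C2 \<in> sets borel" "D2 \<in> sets borel"
    then show "\<exists>C D. {\<omega> \<in> space M. X \<omega> \<in> C1 \<and> Z \<omega> \<in> D1} \<inter> {\<omega> \<in> space M. X \<omega> \<in> C2 \<and> Z \<omega> \<in> D2}
       = {\<omega> \<in> space M. X \<omega> \<in> C \<and> Z \<omega> \<in> D} \<and> C \<in> sets borel \<and> D \<in> sets borel"
      by (intro exI[of _ "C1 \<inter> C2"] exI[of _ "D1 \<inter> D2"]) auto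
  qed
  have spR: "space M \<in> RXZ" unfolding RXZ_def by (intro CollectI exI[of _ UNIV]) auto
  have dyn: "(\<integral>\<omega>\<in>G. indicator A (Y \<omega>) \<partial>M) = (\<integral>\<omega>\<in>G. pA \<omega> \<partial>M)" if "G \<in> sigma_sets (space M) RXZ" for G
    by (rule dynkin_set_integral_eq[OF intA pAint RXZs RXZM rect[OF spR] rect that])
  define NN where "NN = sigma (space M) RXZ"
  have RXZp: "RXZ \<subseteq> Pow (space M)" unfolding RXZ_def by auto
  have sNN: "sets NN = sigma_sets (space M) RXZ" unfolding NN_def by (rule sets_measure_of[OF RXZp])
  have spNN: "space NN = space M" unfolding NN_def by (rule space_measure_of[OF RXZp])
  have XN[measurable]: "X \<in> borel_measurable NN"
  proof (rule measurableI)
    fix C :: "(real^'d) set" assume "C \<in> sets borel"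
    then have "X -` C \<inter> space NN \<in> RXZ" unfolding RXZ_def spNN by (intro CollectI exI[of _ C] exI[of _ UNIV]) auto
    then show "X -` C \<inter> space NN \<in> sets NN" unfolding sNN by blast
  qed simp
  have ZN[measurable]: "Z \<in> borel_measurable NN"
  proof (rule measurableI)
    fix C :: "(real^'k) set" assume "C \<in> sets borel"
    then have "Z -` C \<inter> space NN \<in> RXZ" unfolding RXZ_def spNN by (intro CollectI exI[of _ UNIV] exI[of _ C]) auto
    then show "Z -` C \<inter> space NN \<in> sets NN" unfolding sNN by blast
  qed simp
  have eN[measurable]: "eps \<in> borel_measurable NN"
  proof -
    have "(\<lambda>\<omega>. X \<omega> - B *v Z \<omega>) \<in> borel_measurable NN" by measurable
    then show ?thesis by (rule measurable_cong[THEN iffD1, rotated]) (use Xd spNN in auto)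
  qed
  define G0 where "G0 = {\<omega>\<in>space M. Z \<omega> \<in> D \<and> eps \<omega> \<in> E}"
  have "G0 \<in> sets NN" unfolding G0_def spNN[symmetric] by measurable
  then have G0s: "G0 \<in> sigma_sets (space M) RXZ" using sNN by simp
  define c where "c = prob {\<omega>\<in>space M. eps \<omega> \<in> E}"
  define qE where "qE = real_cond_exp M Fz (\<lambda>\<omega>. indicator E (eps \<omega>))"
  have qEc: "AE \<omega> in M. qE \<omega> = c" unfolding qE_def
  proof (rule Fz.real_cond_exp_charact)
    fix D' assume "D' \<in> sets Fz"
    then obtain D'' where D''[measurable]: "D'' \<in> sets borel" and D': "D' = Z -` D'' \<inter> space M" using sFz by blast
    have "(\<integral>\<omega>\<in>D'. indicator E (eps \<omega>) \<partial>M) = (\<integral>\<omega>. indicator {\<omega>\<in>space M. eps \<omega> \<in> E \<and> Z \<omega> \<in> D''} \<omega> \<partial>M)"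
      unfolding set_lebesgue_integral_def D' by (rule Bochner_Integration.integral_cong) (auto split: split_indicator)
    also have "\<dots> = prob {\<omega>\<in>space M. eps \<omega> \<in> E \<and> Z \<omega> \<in> D''}" by simp
    also have "\<dots> = c * prob D'" using ind E D'' unfolding indep_rv_def c_def D'
      by (auto simp: Int_def conj_commute)
    also have "\<dots> = (\<integral>\<omega>\<in>D'. c \<partial>M)"
      using set_integral_const[of D' M c] D' measurable_sets[OF Zm D''] by simp
    finally show "(\<integral>\<omega>\<in>D'. indicator E (eps \<omega>) \<partial>M) = (\<integral>\<omega>\<in>D'. c \<partial>M)" .
  qed (auto intro: int_ind split: split_indicator)
  define IZ where "IZ = Z -` D \<inter> space M"
  have IZF[measurable]: "IZ \<in> sets Fz" using sFz D unfolding IZ_def by blast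
  have IZM[measurable]: "IZ \<in> sets M" unfolding IZ_def by (rule measurable_sets[OF Zm D])
  have "prob {\<omega>\<in>space M. Y \<omega> \<in> A \<and> Z \<omega> \<in> D \<and> eps \<omega> \<in> E} = (\<integral>\<omega>\<in>G0. indicator A (Y \<omega>) \<partial>M)"
  proof -
    have "prob {\<omega>\<in>space M. Y \<omega> \<in> A \<and> Z \<omega> \<in> D \<and> eps \<omega> \<in> E}
       = (\<integral>\<omega>. indicator {\<omega>\<in>space M. Y \<omega> \<in> A \<and> Z \<omega> \<in> D \<and> eps \<omega> \<in> E} \<omega> \<partial>M)" by simp
    also have "\<dots> = (\<integral>\<omega>\<in>G0. indicator A (Y \<omega>) \<partial>M)"
      unfolding set_lebesgue_integral_def G0_def by (rule Bochner_Integration.integral_cong) (auto split: split_indicator)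
    finally show ?thesis .
  qed
  also have "\<dots> = (\<integral>\<omega>\<in>G0. pA \<omega> \<partial>M)" by (rule dyn[OF G0s])
  also have "\<dots> = (\<integral>\<omega>. (indicator IZ \<omega> * pA \<omega>) * indicator E (eps \<omega>) \<partial>M)"
    unfolding set_lebesgue_integral_def G0_def IZ_def by (rule Bochner_Integration.integral_cong) (auto split: split_indicator)
  also have "\<dots> = (\<integral>\<omega>. (indicator IZ \<omega> * pA \<omega>) * qE \<omega> \<partial>M)" unfolding qE_def
  proof (rule Fz.real_cond_exp_intg(2)[symmetric])
    show "integrable M (\<lambda>x. indicator IZ x * pA x * indicator E (eps x))"
      using int_bound1[OF pAint, of "\<lambda>x. indicator IZ x * indicator E (eps x)"]
      by (auto simp: mult_ac split: split_indicator)
  qed simp_all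
  also have "\<dots> = (\<integral>\<omega>. (indicator IZ \<omega> * pA \<omega>) * c \<partial>M)"
    by (rule integral_cong_AE) (use qEc in \<open>auto simp: qE_def\<close>)
  also have "\<dots> = c * (\<integral>\<omega>\<in>IZ. pA \<omega> \<partial>M)"
    unfolding set_lebesgue_integral_def by (simp add: mult_ac)
  also have "(\<integral>\<omega>\<in>IZ. pA \<omega> \<partial>M) = (\<integral>\<omega>\<in>IZ. indicator A (Y \<omega>) \<partial>M)"
    unfolding pA_def by (rule Fz.real_cond_exp_intA[OF intA IZF, symmetric])
  also have "\<dots> = prob {\<omega>\<in>space M. Y \<omega> \<in> A \<and> Z \<omega> \<in> D}"
  proof -
    have "(\<integral>\<omega>\<in>IZ. indicator A (Y \<omega>) \<partial>M) = (\<integral>\<omega>. (indicator {\<omega>\<in>space M. Y \<omega> \<in> A \<and> Z \<omega> \<in> D} \<omega>::real) \<partial>M)"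
      unfolding set_lebesgue_integral_def IZ_def by (rule Bochner_Integration.integral_cong) (auto split: split_indicator)
    then show ?thesis by simp
  qed
  finally show ?thesis unfolding c_def by (simp add: mult_ac)
qed


lemma (in prob_space) stepBC:
  fixes Z :: "'a \<Rightarrow> real ^ 'k::finite" and Y :: "'a \<Rightarrow> real"
    and eps :: "'a \<Rightarrow> real ^ 'd::finite" and Bt :: "real^'d^'k" and Qm :: "real^'d^'d"
    and V :: "'a \<Rightarrow> real ^ 'k" and K1 K2 :: "real^'k^'k"
  assumes Zm[measurable]: "Z \<in> borel_measurable M" and Ym[measurable]: "Y \<in> borel_measurable M"
    and em[measurable]: "eps \<in> borel_measurable M"
    and R2: "\<And>A D E. A \<in> sets borel \<Longrightarrow> D \<in> sets borel \<Longrightarrow> E \<in> sets borel \<Longrightarrow>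
       prob {\<omega>\<in>space M. Y \<omega> \<in> A \<and> Z \<omega> \<in> D \<and> eps \<omega> \<in> E}
       = prob {\<omega>\<in>space M. Y \<omega> \<in> A \<and> Z \<omega> \<in> D} * prob {\<omega>\<in>space M. eps \<omega> \<in> E}"
    and proj: "indep_rv M (\<lambda>\<omega>. Qm *v eps \<omega>) (\<lambda>\<omega>. Bt *v eps \<omega>)"
    and Vd: "\<forall>\<omega>\<in>space M. V \<omega> = K1 *v Z \<omega> + K2 *v (Bt *v eps \<omega>)"
  shows "distr M borel (\<lambda>\<omega>. Qm *v eps \<omega>) \<Otimes>\<^sub>M distr M borel (\<lambda>\<omega>. ((if Y \<omega> = 1 then 1 else 0::real), V \<omega>))
      = distr M (borel \<Otimes>\<^sub>M borel) (\<lambda>\<omega>. (Qm *v eps \<omega>, ((if Y \<omega> = 1 then 1 else 0::real), V \<omega>)))"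
proof -
  define T where "T = (\<lambda>\<omega>. Bt *v eps \<omega>)"
  define W where "W = (\<lambda>\<omega>. Qm *v eps \<omega>)"
  have Tm[measurable]: "T \<in> borel_measurable M" unfolding T_def by measurable
  have Wm[measurable]: "W \<in> borel_measurable M" unfolding W_def by measurable
  define FYZT where "FYZT = {{\<omega>\<in>space M. Y \<omega> \<in> A \<and> Z \<omega> \<in> D \<and> T \<omega> \<in> c} | A D c.
       A \<in> sets borel \<and> D \<in> sets borel \<and> c \<in> sets borel}"
  define EW where "EW = {W -` e \<inter> space M | e. e \<in> sets borel}"
  have ind0: "indep_set FYZT EW"
  proof (rule indep_setI)
    show "FYZT \<subseteq> events" unfolding FYZT_def by auto
    show "EW \<subseteq> events" unfolding EW_def by auto
    fix a b assume "a \<in> FYZT" "b \<in> EW"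
    then obtain A D c e where A[measurable]: "A \<in> sets borel" and D[measurable]: "D \<in> sets borel"
      and c[measurable]: "c \<in> sets borel" and e[measurable]: "e \<in> sets borel"
      and a: "a = {\<omega>\<in>space M. Y \<omega> \<in> A \<and> Z \<omega> \<in> D \<and> T \<omega> \<in> c}" and b: "b = W -` e \<inter> space M"
      unfolding FYZT_def EW_def by blast
    define E1 where "E1 = {x. Bt *v x \<in> c \<and> Qm *v x \<in> e}"
    define E2 where "E2 = {x. Bt *v x \<in> c}"
    have E1m: "E1 \<in> sets borel" unfolding E1_def by measurable
    have E2m: "E2 \<in> sets borel" unfolding E2_def by measurable
    have "prob (a \<inter> b) = prob {\<omega>\<in>space M. Y \<omega> \<in> A \<and> Z \<omega> \<in> D \<and> eps \<omega> \<in> E1}"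
      unfolding a b E1_def T_def W_def by (rule arg_cong[where f=prob]) auto
    also have "\<dots> = prob {\<omega>\<in>space M. Y \<omega> \<in> A \<and> Z \<omega> \<in> D} * prob {\<omega>\<in>space M. eps \<omega> \<in> E1}"
      by (rule R2[OF A D E1m])
    also have "prob {\<omega>\<in>space M. eps \<omega> \<in> E1} = prob {\<omega>\<in>space M. W \<omega> \<in> e \<and> T \<omega> \<in> c}"
      unfolding E1_def T_def W_def by (rule arg_cong[where f=prob]) auto
    also have "\<dots> = prob {\<omega>\<in>space M. W \<omega> \<in> e} * prob {\<omega>\<in>space M. T \<omega> \<in> c}"
      using proj e c unfolding indep_rv_def W_def T_def by blast
    also have "prob {\<omega>\<in>space M. T \<omega> \<in> c} = prob {\<omega>\<in>space M. eps \<omega> \<in> E2}"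
      unfolding E2_def T_def by (rule arg_cong[where f=prob]) auto
    finally have 1: "prob (a \<inter> b) = prob {\<omega>\<in>space M. Y \<omega> \<in> A \<and> Z \<omega> \<in> D} * prob {\<omega>\<in>space M. eps \<omega> \<in> E2}
        * prob {\<omega>\<in>space M. W \<omega> \<in> e}" by (simp add: mult_ac)
    have "prob a = prob {\<omega>\<in>space M. Y \<omega> \<in> A \<and> Z \<omega> \<in> D \<and> eps \<omega> \<in> E2}"
      unfolding a E2_def T_def by (rule arg_cong[where f=prob]) auto
    also have "\<dots> = prob {\<omega>\<in>space M. Y \<omega> \<in> A \<and> Z \<omega> \<in> D} * prob {\<omega>\<in>space M. eps \<omega> \<in> E2}"
      by (rule R2[OF A D E2m])
    finally have 2: "prob a = prob {\<omega>\<in>space M. Y \<omega> \<in> A \<and> Z \<omega> \<in> D} * prob {\<omega>\<in>space M. eps \<omega> \<in> E2}" .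
    have 3: "prob b = prob {\<omega>\<in>space M. W \<omega> \<in> e}" unfolding b by (rule arg_cong[where f=prob]) auto
    show "prob (a \<inter> b) = prob a * prob b" using 1 2 3 by simp
  qed
  have st1: "Int_stable FYZT" unfolding Int_stable_def FYZT_def
  proof safe
    fix A1 A2 :: "real set" and D1 D2 :: "(real^'k) set" and c1 c2 :: "(real^'k) set"
    assume "A1 \<in> sets borel" "A2 \<in> sets borel" "D1 \<in> sets borel" "D2 \<in> sets borel" "c1 \<in> sets borel" "c2 \<in> sets borel"
    then show "\<exists>A D c. {\<omega> \<in> space M. Y \<omega> \<in> A1 \<and> Z \<omega> \<in> D1 \<and> T \<omega> \<in> c1} \<inter> {\<omega> \<in> space M. Y \<omega> \<in> A2 \<and> Z \<omega> \<in> D2 \<and> T \<omega> \<in> c2}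
       = {\<omega> \<in> space M. Y \<omega> \<in> A \<and> Z \<omega> \<in> D \<and> T \<omega> \<in> c} \<and> A \<in> sets borel \<and> D \<in> sets borel \<and> c \<in> sets borel"
      by (intro exI[of _ "A1 \<inter> A2"] exI[of _ "D1 \<inter> D2"] exI[of _ "c1 \<inter> c2"]) auto
  qed
  have st2: "Int_stable EW" unfolding Int_stable_def EW_def
  proof safe
    fix e1 e2 :: "(real^'d) set" assume "e1 \<in> sets borel" "e2 \<in> sets borel"
    then show "\<exists>e. W -` e1 \<inter> space M \<inter> (W -` e2 \<inter> space M) = W -` e \<inter> space M \<and> e \<in> sets borel"
      by (intro exI[of _ "e1 \<inter> e2"]) auto
  qed
  have ind1: "indep_set (sigma_sets (space M) FYZT) (sigma_sets (space M) EW)"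
    by (rule indep_set_sigma_sets[OF ind0 st1 st2])
  define NN where "NN = sigma (space M) FYZT"
  have FYZTp: "FYZT \<subseteq> Pow (space M)" unfolding FYZT_def by auto
  have sNN: "sets NN = sigma_sets (space M) FYZT" unfolding NN_def by (rule sets_measure_of[OF FYZTp])
  have spNN: "space NN = space M" unfolding NN_def by (rule space_measure_of[OF FYZTp])
  have YN[measurable]: "Y \<in> borel_measurable NN"
  proof (rule measurableI)
    fix C :: "real set" assume "C \<in> sets borel"
    then have "Y -` C \<inter> space NN \<in> FYZT" unfolding FYZT_def spNN
      by (intro CollectI exI[of _ C] exI[of _ UNIV]) auto
    then show "Y -` C \<inter> space NN \<in> sets NN" unfolding sNN by blast
  qed simp
  have ZN[measurable]: "Z \<in> borel_measurable NN"
  proof (rule measurableI)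
    fix C :: "(real^'k) set" assume "C \<in> sets borel"
    then have "Z -` C \<inter> space NN \<in> FYZT" unfolding FYZT_def spNN
      by (intro CollectI exI[of _ UNIV] exI[of _ C]) auto
    then show "Z -` C \<inter> space NN \<in> sets NN" unfolding sNN by blast
  qed simp
  have TN[measurable]: "T \<in> borel_measurable NN"
  proof (rule measurableI)
    fix C :: "(real^'k) set" assume "C \<in> sets borel"
    then have "T -` C \<inter> space NN \<in> FYZT" unfolding FYZT_def spNN
      by (intro CollectI exI[of _ UNIV] exI[of _ C]) auto
    then show "T -` C \<inter> space NN \<in> sets NN" unfolding sNN by blast
  qed simp
  have VN[measurable]: "V \<in> borel_measurable NN"
  proof -
    have "(\<lambda>\<omega>. K1 *v Z \<omega> + K2 *v T \<omega>) \<in> borel_measurable NN" by measurable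
    then show ?thesis by (rule measurable_cong[THEN iffD1, rotated]) (use Vd spNN in \<open>auto simp: T_def\<close>)
  qed
  define SV where "SV = (\<lambda>\<omega>. ((if Y \<omega> = 1 then 1 else 0::real), V \<omega>))"
  have SVN: "SV \<in> borel_measurable NN" unfolding SV_def by measurable
  have VM[measurable]: "V \<in> borel_measurable M"
  proof -
    have "(\<lambda>\<omega>. K1 *v Z \<omega> + K2 *v T \<omega>) \<in> borel_measurable M" by measurable
    then show ?thesis by (rule measurable_cong[THEN iffD1, rotated]) (use Vd in \<open>auto simp: T_def\<close>)
  qed
  have sub: "{SV -` A \<inter> space M | A. A \<in> sets borel} \<subseteq> sigma_sets (space M) FYZT"
  proof safe
    fix A :: "(real \<times> (real^'k)) set" assume "A \<in> sets borel"
    then have "SV -` A \<inter> space NN \<in> sets NN" using SVN by (rule measurable_sets[rotated])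
    then show "SV -` A \<inter> space M \<in> sigma_sets (space M) FYZT" using sNN spNN by simp
  qed
  have SVm[measurable]: "SV \<in> borel_measurable M" unfolding SV_def by measurable
  have "distr M borel W \<Otimes>\<^sub>M distr M borel SV = distr M (borel \<Otimes>\<^sub>M borel) (\<lambda>\<omega>. (W \<omega>, SV \<omega>))"
  proof (rule pair_measure_eqI)
    show "sigma_finite_measure (distr M borel W)"
      using prob_space_distr[OF Wm] by (simp add: prob_space_imp_sigma_finite)
    show "sigma_finite_measure (distr M borel SV)"
      using prob_space_distr[OF SVm] by (simp add: prob_space_imp_sigma_finite)
    show "sets (distr M borel W \<Otimes>\<^sub>M distr M borel SV) = sets (distr M (borel \<Otimes>\<^sub>M borel) (\<lambda>\<omega>. (W \<omega>, SV \<omega>)))"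
      unfolding sets_distr by (rule sets_pair_measure_cong) simp_all
    fix A B assume A: "A \<in> sets (distr M borel W)" and B: "B \<in> sets (distr M borel SV)"
    then have A[measurable]: "A \<in> sets borel" and B[measurable]: "B \<in> sets borel" by simp_all
    have a: "W -` A \<inter> space M \<in> sigma_sets (space M) EW" unfolding EW_def using A by blast
    have b: "SV -` B \<inter> space M \<in> sigma_sets (space M) FYZT" using sub B by blast
    have "prob (SV -` B \<inter> space M \<inter> (W -` A \<inter> space M)) = prob (SV -` B \<inter> space M) * prob (W -` A \<inter> space M)"
      by (rule indep_setD[OF ind1 b a])
    moreover have "(\<lambda>\<omega>. (W \<omega>, SV \<omega>)) -` (A \<times> B) \<inter> space M = SV -` B \<inter> space M \<inter> (W -` A \<inter> space M)" by auto
    ultimately show "emeasure (distr M borel W) A * emeasure (distr M borel SV) B = emeasure (distr M (borel \<Otimes>\<^sub>M borel) (\<lambda>\<omega>. (W \<omega>, SV \<omega>))) (A \<times> B)"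
      by (simp add: emeasure_distr emeasure_eq_measure ennreal_mult' mult.commute)
  qed
  then show ?thesis unfolding W_def SV_def .
qed


lemma (in prob_space) stepD:
  fixes Y :: "'a \<Rightarrow> real" and X W :: "'a \<Rightarrow> real ^ 'd::finite"
    and U :: "real^'k::finite^'d" and Ut :: "real^'d^'k"
  assumes Ym[measurable]: "Y \<in> borel_measurable M" and Xm[measurable]: "X \<in> borel_measurable M"
    and Wm[measurable]: "W \<in> borel_measurable M"
    and XUW: "\<forall>\<omega>\<in>space M. X \<omega> = U *v (Ut *v X \<omega>) + W \<omega>"
    and prodeq: "distr M borel W \<Otimes>\<^sub>M distr M borel (\<lambda>\<omega>. ((if Y \<omega> = 1 then 1 else 0::real), Ut *v X \<omega>))
      = distr M (borel \<Otimes>\<^sub>M borel) (\<lambda>\<omega>. (W \<omega>, ((if Y \<omega> = 1 then 1 else 0::real), Ut *v X \<omega>)))"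
  shows "\<exists>eta_t \<in> borel_measurable (borel :: (real^'k) measure).
     AE \<omega> in M. real_cond_exp M (vimage_algebra (space M) X borel) (\<lambda>\<omega>. if Y \<omega> = 1 then 1 else 0) \<omega>
        = eta_t (Ut *v X \<omega>)"
proof -
  define S where "S = (\<lambda>\<omega>. if Y \<omega> = 1 then 1 else 0::real)"
  define V where "V = (\<lambda>\<omega>. Ut *v X \<omega>)"
  define SV where "SV = (\<lambda>\<omega>. (S \<omega>, V \<omega>))"
  have Sm[measurable]: "S \<in> borel_measurable M" unfolding S_def by measurable
  have Vm[measurable]: "V \<in> borel_measurable M" unfolding V_def by measurable
  have SVm[measurable]: "SV \<in> borel_measurable M" unfolding SV_def by measurable
  have S01: "\<And>\<omega>. 0 \<le> S \<omega> \<and> S \<omega> \<le> 1" unfolding S_def by auto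
  define nu where "nu = distr M borel V"
  define mu where "mu = distr (density M (\<lambda>\<omega>. ennreal (S \<omega>))) borel V"
  interpret nu: prob_space nu unfolding nu_def by (rule prob_space_distr) simp
  have Vd[measurable]: "V \<in> measurable (density M (\<lambda>\<omega>. ennreal (S \<omega>))) borel" by simp
  have snm: "sets mu = sets nu" unfolding mu_def nu_def by simp
  have mu_a: "emeasure mu a = (\<integral>\<^sup>+\<omega>. ennreal (S \<omega>) * indicator a (V \<omega>) \<partial>M)" if a[measurable]: "a \<in> sets borel" for a
  proof -
    have "emeasure mu a = emeasure (density M (\<lambda>\<omega>. ennreal (S \<omega>))) (V -` a \<inter> space M)"
      unfolding mu_def by (subst emeasure_distr) simp_all
    also have "\<dots> = (\<integral>\<^sup>+\<omega>. ennreal (S \<omega>) * indicator (V -` a \<inter> space M) \<omega> \<partial>M)"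
      by (rule emeasure_density) simp_all
    also have "\<dots> = (\<integral>\<^sup>+\<omega>. ennreal (S \<omega>) * indicator a (V \<omega>) \<partial>M)"
      apply (rule nn_integral_cong) 
      subgoal premises p for x
      using p apply (auto split: split_indicator)
      done
      done
    finally show ?thesis .
  qed
  have mufin: "finite_measure mu"
  proof (rule finite_measureI)
    have "space mu = UNIV" unfolding mu_def by simp
    then have "emeasure mu (space mu) = (\<integral>\<^sup>+\<omega>. ennreal (S \<omega>) * indicator UNIV (V \<omega>) \<partial>M)"
      using mu_a[of UNIV] by simp
    also have "\<dots> \<le> (\<integral>\<^sup>+\<omega>. 1 \<partial>M)"
      by (rule nn_integral_mono) (use S01 in auto)
    also have "\<dots> = 1" by (simp add: emeasure_space_1)
    finally show "emeasure mu (space mu) \<noteq> \<infinity>" by (auto simp: top_unique)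
  qed
  have ac: "absolutely_continuous nu mu" unfolding absolutely_continuous_def
  proof
    fix a assume "a \<in> null_sets nu"
    then have a[measurable]: "a \<in> sets borel" and "emeasure M (V -` a \<inter> space M) = 0"
      unfolding nu_def by (auto simp: emeasure_distr null_sets_def)
    then have "V -` a \<inter> space M \<in> null_sets M" by auto
    then have "AE \<omega> in M. \<omega> \<notin> V -` a \<inter> space M" by (rule AE_not_in)
    from this AE_space have "AE \<omega> in M. ennreal (S \<omega>) * indicator a (V \<omega>) = 0"
      by eventually_elim (auto split: split_indicator)
    then have "emeasure mu a = 0" using mu_a[OF a] by (simp add: nn_integral_0_iff_AE)
    then show "a \<in> null_sets mu" using a snm unfolding nu_def by (simp add: null_sets_def)
  qed
  define r where "r = RN_deriv nu mu"
  have dens: "density nu r = mu" unfolding r_def by (rule nu.density_RN_deriv[OF ac snm])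
  have rfin: "AE v in nu. r v \<noteq> \<infinity>" unfolding r_def
    by (rule nu.RN_deriv_finite[OF _ ac snm]) (use mufin in \<open>simp add: finite_measure_def\<close>)
  define eta_t where "eta_t = (\<lambda>v. enn2real (r v))"
  have etam[measurable]: "eta_t \<in> borel_measurable borel"
  proof -
    have "r \<in> borel_measurable nu" unfolding r_def by simp
    then have "r \<in> borel_measurable borel" unfolding nu_def by simp
    then show ?thesis unfolding eta_t_def by measurable
  qed
  have key: "(\<integral>\<^sup>+\<omega>. ennreal (S \<omega>) * indicator a (V \<omega>) \<partial>M) = (\<integral>\<^sup>+\<omega>. ennreal (eta_t (V \<omega>)) * indicator a (V \<omega>) \<partial>M)"
    if a[measurable]: "a \<in> sets borel" for a
  proof -
    have "(\<integral>\<^sup>+\<omega>. ennreal (eta_t (V \<omega>)) * indicator a (V \<omega>) \<partial>M) = (\<integral>\<^sup>+v. ennreal (eta_t v) * indicator a v \<partial>nu)"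
      unfolding nu_def by (subst nn_integral_distr) simp_all
    also have "\<dots> = (\<integral>\<^sup>+v. r v * indicator a v \<partial>nu)"
      by (rule nn_integral_cong_AE) (use rfin in \<open>auto simp: eta_t_def less_top\<close>)
    also have "\<dots> = emeasure (density nu r) a"
      by (rule emeasure_density[symmetric]) (simp_all add: r_def nu_def)
    also have "\<dots> = emeasure mu a" using dens by simp
    finally show ?thesis using mu_a[OF a] by simp
  qed
  define Fx where "Fx = vimage_algebra (space M) X borel"
  have sFx: "sets Fx = {X -` A \<inter> space M | A. A \<in> sets borel}"
    unfolding Fx_def by (rule sets_vimage_algebra2) simp
  have subFx: "subalgebra M Fx" unfolding subalgebra_def
    using sFx measurable_sets[OF Xm] by (auto simp: Fx_def)
  interpret Fx: sigma_finite_subalgebra M Fx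
    using finite_measure_subalgebra_is_sigma_finite[of M Fx] subFx finite_measure_axioms
    unfolding finite_measure_subalgebra_def finite_measure_subalgebra_axioms_def by blast
  have XF[measurable]: "X \<in> measurable Fx borel" unfolding Fx_def by (rule measurable_vimage_algebra1) simp
  have gF: "(\<lambda>\<omega>. eta_t (Ut *v X \<omega>)) \<in> borel_measurable Fx" by measurable
  have gM[measurable]: "(\<lambda>\<omega>. eta_t (V \<omega>)) \<in> borel_measurable M" by measurable
  have intS: "integrable M S" by (rule int_ind) (use S01 in auto)
  have intg: "integrable M (\<lambda>\<omega>. eta_t (V \<omega>))"
  proof (rule integrableI_nonneg)
    show "AE x in M. 0 \<le> eta_t (V x)" by (simp add: eta_t_def)
    have "(\<integral>\<^sup>+\<omega>. ennreal (eta_t (V \<omega>)) \<partial>M) = (\<integral>\<^sup>+\<omega>. ennreal (S \<omega>) * indicator UNIV (V \<omega>) \<partial>M)"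
      using key[of UNIV] by simp
    also have "\<dots> \<le> (\<integral>\<^sup>+\<omega>. 1 \<partial>M)"
      by (rule nn_integral_mono) (use S01 in auto)
    also have "\<dots> = 1" by (simp add: emeasure_space_1)
    finally show "(\<integral>\<^sup>+\<omega>. ennreal (eta_t (V \<omega>)) \<partial>M) < \<infinity>" by (auto simp: le_less_trans)
  qed simp
  interpret SVp: prob_space "distr M borel SV" by (rule prob_space_distr) simp
  have core: "(\<integral>\<^sup>+\<omega>. ennreal (S \<omega>) * indicator Bs (X \<omega>) \<partial>M) = (\<integral>\<^sup>+\<omega>. ennreal (eta_t (V \<omega>)) * indicator Bs (X \<omega>) \<partial>M)"
    if Bs[measurable]: "Bs \<in> sets borel" for Bs
  proof -
    have gen: "(\<integral>\<^sup>+\<omega>. ennreal (f (S \<omega>) (V \<omega>)) * indicator Bs (X \<omega>) \<partial>M)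
      = (\<integral>\<^sup>+w. (\<integral>\<^sup>+p. ennreal (f (fst p) (snd p)) * indicator Bs (U *v snd p + w) \<partial>distr M borel SV) \<partial>distr M borel W)"
      if fm[measurable]: "(\<lambda>(s, v). f s v) \<in> borel_measurable borel" for f :: "real \<Rightarrow> real^'k \<Rightarrow> real"
    proof -
      have fm'[measurable]: "(\<lambda>x. f (fst x) (snd x)) \<in> borel_measurable borel" using fm by (simp add: case_prod_beta')
      have "(\<lambda>x. f (fst x) (snd x)) \<in> borel_measurable (borel \<Otimes>\<^sub>M borel)" using fm' by (simp add: borel_prod)
      then have "(\<lambda>(w, p). ennreal (f (fst p) (snd p)) * indicator Bs (U *v snd p + w))
          \<in> borel_measurable (borel \<Otimes>\<^sub>M (borel \<Otimes>\<^sub>M borel))" by measurable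
      then have hm[measurable]: "(\<lambda>(w, p). ennreal (f (fst p) (snd p)) * indicator Bs (U *v snd p + w))
          \<in> borel_measurable (borel \<Otimes>\<^sub>M borel)" by (simp add: borel_prod)
      have "(\<integral>\<^sup>+\<omega>. ennreal (f (S \<omega>) (V \<omega>)) * indicator Bs (X \<omega>) \<partial>M)
        = (\<integral>\<^sup>+\<omega>. (\<lambda>(w, p). ennreal (f (fst p) (snd p)) * indicator Bs (U *v snd p + w)) (W \<omega>, SV \<omega>) \<partial>M)"
        by (rule nn_integral_cong) (use XUW in \<open>auto simp: SV_def V_def\<close>)
      also have "\<dots> = (\<integral>\<^sup>+x. (\<lambda>(w, p). ennreal (f (fst p) (snd p)) * indicator Bs (U *v snd p + w)) x
           \<partial>distr M (borel \<Otimes>\<^sub>M borel) (\<lambda>\<omega>. (W \<omega>, SV \<omega>)))"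
        by (subst nn_integral_distr) simp_all
      also have "distr M (borel \<Otimes>\<^sub>M borel) (\<lambda>\<omega>. (W \<omega>, SV \<omega>)) = distr M borel W \<Otimes>\<^sub>M distr M borel SV"
        using prodeq unfolding SV_def S_def V_def by simp
      also have "(\<integral>\<^sup>+x. (\<lambda>(w, p). ennreal (f (fst p) (snd p)) * indicator Bs (U *v snd p + w)) x
           \<partial>(distr M borel W \<Otimes>\<^sub>M distr M borel SV))
        = (\<integral>\<^sup>+w. (\<integral>\<^sup>+p. ennreal (f (fst p) (snd p)) * indicator Bs (U *v snd p + w) \<partial>distr M borel SV) \<partial>distr M borel W)"
        by (subst SVp.nn_integral_fst[symmetric]) simp_all
      finally show ?thesis .
    qed
    have inner: "(\<integral>\<^sup>+p. ennreal (fst p) * indicator Bs (U *v snd p + w) \<partial>distr M borel SV)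
       = (\<integral>\<^sup>+p. ennreal (eta_t (snd p)) * indicator Bs (U *v snd p + w) \<partial>distr M borel SV)" for w
    proof -
      define a where "a = (\<lambda>v. U *v v + w) -` Bs"
      have am[measurable]: "a \<in> sets borel" unfolding a_def
        using measurable_sets[of "\<lambda>v. U *v v + w" borel borel Bs] by simp
      have "(\<lambda>p. ennreal (fst p) * indicator Bs (U *v snd p + w)) \<in> borel_measurable (borel \<Otimes>\<^sub>M borel)" by measurable
      then have [measurable]: "(\<lambda>p. ennreal (fst p) * indicator Bs (U *v snd p + w)) \<in> borel_measurable borel"
        by (simp add: borel_prod)
      have "(\<lambda>p::real \<times> (real^'k). ennreal (eta_t (snd p)) * indicator Bs (U *v snd p + w)) \<in> borel_measurable (borel \<Otimes>\<^sub>M borel)" by measurable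
      then have [measurable]: "(\<lambda>p::real \<times> (real^'k). ennreal (eta_t (snd p)) * indicator Bs (U *v snd p + w)) \<in> borel_measurable borel"
        by (simp add: borel_prod)
      have "(\<integral>\<^sup>+p. ennreal (fst p) * indicator Bs (U *v snd p + w) \<partial>distr M borel SV)
         = (\<integral>\<^sup>+\<omega>. ennreal (fst (SV \<omega>)) * indicator Bs (U *v snd (SV \<omega>) + w) \<partial>M)"
        by (rule nn_integral_distr) simp_all
      also have "\<dots> = (\<integral>\<^sup>+\<omega>. ennreal (S \<omega>) * indicator a (V \<omega>) \<partial>M)"
        by (rule nn_integral_cong) (auto simp: SV_def a_def split: split_indicator)
      also have "\<dots> = (\<integral>\<^sup>+\<omega>. ennreal (eta_t (V \<omega>)) * indicator a (V \<omega>) \<partial>M)" by (rule key[OF am])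
      also have "\<dots> = (\<integral>\<^sup>+\<omega>. ennreal (eta_t (snd (SV \<omega>))) * indicator Bs (U *v snd (SV \<omega>) + w) \<partial>M)"
        by (rule nn_integral_cong) (auto simp: SV_def a_def split: split_indicator)
      also have "\<dots> = (\<integral>\<^sup>+p. ennreal (eta_t (snd p)) * indicator Bs (U *v snd p + w) \<partial>distr M borel SV)"
        by (rule nn_integral_distr[symmetric]) simp_all
      finally show ?thesis .
    qed
    have "(\<lambda>(s::real, v::real^'k). s) \<in> borel_measurable (borel \<Otimes>\<^sub>M borel)" by measurable
    then have m1: "(\<lambda>(s::real, v::real^'k). s) \<in> borel_measurable borel" by (simp add: borel_prod)
    have "(\<lambda>(s::real, v::real^'k). eta_t v) \<in> borel_measurable (borel \<Otimes>\<^sub>M borel)" by measurable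
    then have m2: "(\<lambda>(s::real, v::real^'k). eta_t v) \<in> borel_measurable borel" by (simp add: borel_prod)
    have "(\<integral>\<^sup>+\<omega>. ennreal (S \<omega>) * indicator Bs (X \<omega>) \<partial>M)
       = (\<integral>\<^sup>+w. (\<integral>\<^sup>+p. ennreal (fst p) * indicator Bs (U *v snd p + w) \<partial>distr M borel SV) \<partial>distr M borel W)"
      using gen[of "\<lambda>s v. s"] m1 by simp
    also have "\<dots> = (\<integral>\<^sup>+w. (\<integral>\<^sup>+p. ennreal (eta_t (snd p)) * indicator Bs (U *v snd p + w) \<partial>distr M borel SV) \<partial>distr M borel W)"
      using inner by simp
    also have "\<dots> = (\<integral>\<^sup>+\<omega>. ennreal (eta_t (V \<omega>)) * indicator Bs (X \<omega>) \<partial>M)"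
      using gen[of "\<lambda>s v. eta_t v"] m2 by simp
    finally show ?thesis .
  qed
  have "AE \<omega> in M. real_cond_exp M Fx S \<omega> = eta_t (Ut *v X \<omega>)"
  proof (rule Fx.real_cond_exp_charact)
    fix A assume "A \<in> sets Fx"
    then obtain Bs where Bs[measurable]: "Bs \<in> sets borel" and A: "A = X -` Bs \<inter> space M" using sFx by blast
    have Am[measurable]: "A \<in> sets M" unfolding A by simp
    have "ennreal (\<integral>\<omega>\<in>A. S \<omega> \<partial>M) = (\<integral>\<^sup>+\<omega>\<in>A. S \<omega> \<partial>M)"
      by (rule nn_set_integral_eq_set_integral[symmetric]) (use intS S01 in auto)
    also have "\<dots> = (\<integral>\<^sup>+\<omega>. ennreal (S \<omega>) * indicator Bs (X \<omega>) \<partial>M)"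
      by (rule nn_integral_cong) (auto simp: A split: split_indicator)
    also have "\<dots> = (\<integral>\<^sup>+\<omega>. ennreal (eta_t (V \<omega>)) * indicator Bs (X \<omega>) \<partial>M)" by (rule core[OF Bs])
    also have "\<dots> = (\<integral>\<^sup>+\<omega>\<in>A. eta_t (V \<omega>) \<partial>M)"
      by (rule nn_integral_cong) (auto simp: A split: split_indicator)
    also have "\<dots> = ennreal (\<integral>\<omega>\<in>A. eta_t (V \<omega>) \<partial>M)"
      by (rule nn_set_integral_eq_set_integral) (use intg in \<open>auto simp: eta_t_def\<close>)
    finally have "ennreal (\<integral>\<omega>\<in>A. S \<omega> \<partial>M) = ennreal (\<integral>\<omega>\<in>A. eta_t (V \<omega>) \<partial>M)" .
    moreover have "0 \<le> (\<integral>\<omega>\<in>A. S \<omega> \<partial>M)" "0 \<le> (\<integral>\<omega>\<in>A. eta_t (V \<omega>) \<partial>M)"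
      unfolding set_lebesgue_integral_def using S01
      by (auto intro!: integral_nonneg_AE simp: eta_t_def split: split_indicator)
    ultimately show "(\<integral>\<omega>\<in>A. S \<omega> \<partial>M) = (\<integral>\<omega>\<in>A. eta_t (Ut *v X \<omega>) \<partial>M)"
      by (simp add: V_def)
  qed (use intS intg gF in \<open>simp_all add: V_def\<close>)
  then show ?thesis using etam unfolding S_def Fx_def by blast
qed


lemma diag_mult:
  fixes a b :: "'k::finite \<Rightarrow> real"
  shows "(\<chi> i j. if i = j then a i else 0) ** (\<chi> i j. if i = j then b i else 0)
       = (\<chi> i j. if i = j then a i * b i else (0::real))"
proof -
  have "(\<Sum>k\<in>UNIV. (if i = k then a i else 0) * (if k = j then b k else 0)) = (if i = j then a i * b i else 0)" for i j :: 'k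
  proof -
    have "(\<Sum>k\<in>UNIV. (if i = k then a i else 0) * (if k = j then b k else 0)) = (\<Sum>k\<in>UNIV. if k = i then a i * (if i = j then b i else 0) else 0)"
      by (rule sum.cong) auto
    also have "\<dots> = (if i = j then a i * b i else 0)" by simp
    finally show ?thesis .
  qed
  then show ?thesis by (simp add: vec_eq_iff matrix_matrix_mult_def)
qed

lemma mult_diag_right:
  fixes A :: "real^'k::finite^'m::finite" and d :: "'k \<Rightarrow> real"
  shows "A ** (\<chi> i j. if i = j then d i else 0) = (\<chi> r c. A $ r $ c * d c)"
proof -
  have "(\<Sum>k\<in>UNIV. A $ r $ k * (if k = c then d k else 0)) = A $ r $ c * d c" for r c
  proof -
    have "(\<Sum>k\<in>UNIV. A $ r $ k * (if k = c then d k else 0)) = (\<Sum>k\<in>UNIV. if k = c then A $ r $ c * d c else 0)"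
      by (rule sum.cong) auto
    also have "\<dots> = A $ r $ c * d c" by simp
    finally show ?thesis .
  qed
  then show ?thesis by (simp add: vec_eq_iff matrix_matrix_mult_def)
qed

lemma LA:
  fixes B :: "real^'k::finite^'d::finite" and lam :: "'k \<Rightarrow> real"
  assumes BtB: "transpose B ** B = (\<chi> i j. if i = j then lam i else 0)" and pos: "\<forall>i. lam i > 0"
    and U_def: "U = (\<chi> r c. B $ r $ c / sqrt (lam c))"
    and D1_def: "D1 = (\<chi> i j. if i = j then 1 / sqrt (lam i) else (0::real))"
    and Minv_def: "Minv = matrix_inv (transpose B ** B)"
  shows "x = B *v z + e \<Longrightarrow> x = U *v (transpose U *v x) + (mat 1 - B ** Minv ** transpose B) *v e"
    and "x = B *v z + e \<Longrightarrow> transpose U *v x = (D1 ** (transpose B ** B)) *v z + D1 *v (transpose B *v e)"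
proof -
  define Di where "Di = (\<chi> i j. if i = j then 1 / lam i else (0::real))"
  define Dl where "Dl = (\<chi> i j. if i = j then lam i else (0::real))"
  have DlDi: "Dl ** Di = mat 1" "Di ** Dl = mat 1"
  proof -
    have nz: "\<And>i. lam i \<noteq> 0" using pos by (metis less_irrefl)
    show "Dl ** Di = mat 1" "Di ** Dl = mat 1"
      unfolding Dl_def Di_def diag_mult using nz by (simp_all add: vec_eq_iff mat_def)
  qed
  have inv: "invertible (transpose B ** B)" unfolding invertible_def BtB Dl_def[symmetric]
    using DlDi by blast
  have Mi: "(transpose B ** B) ** Minv = mat 1 \<and> Minv ** (transpose B ** B) = mat 1"
    unfolding Minv_def matrix_inv_def by (rule someI_ex) (use inv in \<open>simp add: invertible_def\<close>)
  have MiDi: "Minv = Di"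
  proof -
    have "Minv = Minv ** (Dl ** Di)" using DlDi by simp
    also have "\<dots> = (Minv ** Dl) ** Di" by (simp add: matrix_mul_assoc)
    also have "Minv ** Dl = mat 1" using Mi BtB Dl_def by simp
    finally show ?thesis by simp
  qed
  have UB: "U = B ** D1"
    unfolding U_def D1_def mult_diag_right by simp
  have D1t: "transpose D1 = D1" unfolding D1_def by (simp add: vec_eq_iff transpose_def)
  have Ut: "transpose U = D1 ** transpose B" unfolding UB matrix_transpose_mul D1t ..
  have D1D1: "D1 ** D1 = Di" unfolding D1_def Di_def diag_mult using pos
  proof -
    have h: "1 / sqrt (lam i) * (1 / sqrt (lam i)) = 1 / lam i" for i
    proof -
      have "sqrt (lam i) * sqrt (lam i) = lam i" using pos[rule_format, of i] by simp
      moreover have "1 / sqrt (lam i) * (1 / sqrt (lam i)) = 1 / (sqrt (lam i) * sqrt (lam i))" by simp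
      ultimately show ?thesis by simp
    qed
    show "(\<chi> i j. if i = j then 1 / sqrt (lam i) * (1 / sqrt (lam i)) else (0::real)) = (\<chi> i j. if i = j then 1 / lam i else 0)"
      by (simp only: h)
  qed
  have UUt: "U ** transpose U = B ** Minv ** transpose B"
    unfolding Ut unfolding UB MiDi D1D1[symmetric] by (simp add: matrix_mul_assoc)
  have PB: "(B ** Minv ** transpose B) ** B = B"
    using Mi by (simp add: matrix_mul_assoc[symmetric])
  show "x = U *v (transpose U *v x) + (mat 1 - B ** Minv ** transpose B) *v e" if x: "x = B *v z + e"
  proof -
    have "U *v (transpose U *v x) = (B ** Minv ** transpose B) *v (B *v z + e)"
      unfolding x matrix_vector_mul_assoc UUt ..
    also have "\<dots> = B *v z + (B ** Minv ** transpose B) *v e"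
      by (simp add: matrix_vector_right_distrib matrix_vector_mul_assoc PB)
    finally show ?thesis unfolding x by (simp add: matrix_vector_mult_diff_rdistrib)
  qed
  show "transpose U *v x = (D1 ** (transpose B ** B)) *v z + D1 *v (transpose B *v e)" if x: "x = B *v z + e"
  proof -
    have "transpose U *v x = (D1 ** transpose B) *v (B *v z + e)" using x Ut by simp
    also have "\<dots> = (D1 ** (transpose B ** B)) *v z + D1 *v (transpose B *v e)"
      apply (simp only: matrix_vector_right_distrib)
      apply (simp only: matrix_vector_mul_assoc matrix_mul_assoc)
      done
    finally show ?thesis .
  qed
qed


theorem proposition1:
  fixes M :: "'a measure"
    and Z :: "'a \<Rightarrow> real ^ 'k::{finite,linorder}"
    and Y :: "'a \<Rightarrow> real"
    and eps :: "'a \<Rightarrow> real ^ 'd::finite"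
    and X :: "'a \<Rightarrow> real ^ 'd"
    and B :: "real ^ 'k::{finite,linorder} ^ 'd"
    and lam :: "'k \<Rightarrow> real"
  assumes prob: "prob_space M"
    and Z_meas: "Z \<in> borel_measurable M"
    and Y_meas: "Y \<in> borel_measurable M"
    and Y_vals: "\<forall>\<omega>\<in>space M. Y \<omega> \<in> {-1, 1}"
    and Z_given_Y_density: "\<forall>y\<in>{-1, 1}. \<forall>A\<in>sets lborel.
          emeasure lborel A = 0 \<longrightarrow> measure M {\<omega>\<in>space M. Z \<omega> \<in> A \<and> Y \<omega> = y} = 0"
    and Z_sq_int: "\<forall>i. integrable M (\<lambda>\<omega>. (Z \<omega> $ i)^2)"
    and Z_var: "\<forall>i j. integral\<^sup>L M (\<lambda>\<omega>. (Z \<omega> $ i - integral\<^sup>L M (\<lambda>\<omega>'. Z \<omega>' $ i))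
                                     * (Z \<omega> $ j - integral\<^sup>L M (\<lambda>\<omega>'. Z \<omega>' $ j)))
                   = (if i = j then 1 else 0)"
    and eps_meas: "eps \<in> borel_measurable M"
    and eps_int: "\<forall>i. integrable M (\<lambda>\<omega>. eps \<omega> $ i)"
    and eps_mean: "\<forall>i. integral\<^sup>L M (\<lambda>\<omega>. eps \<omega> $ i) = 0"
    and eps_indep_Z: "indep_rv M eps Z"
    and eps_cont: "absolutely_continuous lborel (distr M lborel eps)"
    and X_def: "\<forall>\<omega>\<in>space M. X \<omega> = B *v Z \<omega> + eps \<omega>"
    and BtB: "transpose B ** B = (\<chi> i j. if i = j then lam i else 0)"
    and lam_pos: "\<forall>i. lam i > 0"
    and lam_ord: "\<forall>i j. i \<le> j \<longrightarrow> lam j \<le> lam i"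
    and proj_indep: "indep_rv M
          (\<lambda>\<omega>. (mat 1 - B ** matrix_inv (transpose B ** B) ** transpose B) *v eps \<omega>)
          (\<lambda>\<omega>. transpose B *v eps \<omega>)"
    and Y_cond_indep: "cond_indep_given M Y X Z"
  shows "\<forall>eta. is_regression_fn M Y X eta \<longrightarrow>
           (\<exists>eta_t f_t. eta_t \<in> borel_measurable (borel :: (real ^ 'k::{finite,linorder}) measure) \<and>
              f_t \<in> borel_measurable (borel :: (real ^ 'k::{finite,linorder}) measure) \<and>
              (AE x in distr M borel X.
                 eta x = eta_t (transpose (\<chi> r c. B $ r $ c / sqrt (lam c)) *v x) \<and>
                 bayes_rule eta x = f_t (transpose (\<chi> r c. B $ r $ c / sqrt (lam c)) *v x)))"
proof (intro allI impI)
  fix eta assume reg: "is_regression_fn M Y X eta"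
  interpret P: prob_space M by (rule prob)
  have Xm[measurable]: "X \<in> borel_measurable M"
  proof -
    have "(\<lambda>\<omega>. B *v Z \<omega> + eps \<omega>) \<in> borel_measurable M" using Z_meas eps_meas by measurable
    then show ?thesis by (rule measurable_cong[THEN iffD1, rotated]) (use X_def in auto)
  qed
  define U where "U = (\<chi> r c. B $ r $ c / sqrt (lam c))"
  define D1 where "D1 = (\<chi> i j. if i = j then 1 / sqrt (lam i) else (0::real))"
  define Minv where "Minv = matrix_inv (transpose B ** B)"
  note LA1 = LA(1)[OF BtB lam_pos U_def D1_def Minv_def]
  note LA2 = LA(2)[OF BtB lam_pos U_def D1_def Minv_def]
  have R2: "\<And>A D E. A \<in> sets borel \<Longrightarrow> D \<in> sets borel \<Longrightarrow> E \<in> sets borel \<Longrightarrow>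
       P.prob {\<omega>\<in>space M. Y \<omega> \<in> A \<and> Z \<omega> \<in> D \<and> eps \<omega> \<in> E}
       = P.prob {\<omega>\<in>space M. Y \<omega> \<in> A \<and> Z \<omega> \<in> D} * P.prob {\<omega>\<in>space M. eps \<omega> \<in> E}"
    by (rule P.stepA[OF Z_meas Y_meas eps_meas Xm eps_indep_Z X_def Y_cond_indep])
  have Vd: "\<forall>\<omega>\<in>space M. transpose U *v X \<omega> = (D1 ** (transpose B ** B)) *v Z \<omega> + D1 *v (transpose B *v eps \<omega>)"
    using X_def LA2 by blast
  have prodeq: "distr M borel (\<lambda>\<omega>. (mat 1 - B ** Minv ** transpose B) *v eps \<omega>)
      \<Otimes>\<^sub>M distr M borel (\<lambda>\<omega>. ((if Y \<omega> = 1 then 1 else 0::real), transpose U *v X \<omega>))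
      = distr M (borel \<Otimes>\<^sub>M borel) (\<lambda>\<omega>. ((mat 1 - B ** Minv ** transpose B) *v eps \<omega>,
          ((if Y \<omega> = 1 then 1 else 0::real), transpose U *v X \<omega>)))"
    by (rule P.stepBC[OF Z_meas Y_meas eps_meas R2 proj_indep[folded Minv_def] Vd])
  have XUW: "\<forall>\<omega>\<in>space M. X \<omega> = U *v (transpose U *v X \<omega>) + (mat 1 - B ** Minv ** transpose B) *v eps \<omega>"
    using X_def LA1 by blast
  have Wm: "(\<lambda>\<omega>. (mat 1 - B ** Minv ** transpose B) *v eps \<omega>) \<in> borel_measurable M"
    using eps_meas by measurable
  obtain eta_t where etam: "eta_t \<in> borel_measurable (borel :: (real^'k::{finite,linorder}) measure)"
    and etaAE: "AE \<omega> in M. real_cond_exp M (vimage_algebra (space M) X borel) (\<lambda>\<omega>. if Y \<omega> = 1 then 1 else 0) \<omega>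
        = eta_t (transpose U *v X \<omega>)"
    using P.stepD[OF Y_meas Xm Wm XUW prodeq] by blast
  have etaM[measurable]: "eta \<in> borel_measurable borel" and regAE: "AE \<omega> in M. eta (X \<omega>) =
        real_cond_exp M (vimage_algebra (space M) X borel) (\<lambda>\<omega>. if Y \<omega> = 1 then 1 else 0) \<omega>"
    using reg unfolding is_regression_fn_def by auto
  note etam[measurable]
  have ftm: "bayes_rule eta_t \<in> borel_measurable (borel :: (real^'k::{finite,linorder}) measure)"
    unfolding bayes_rule_def by measurable
  have AE1: "AE \<omega> in M. eta (X \<omega>) = eta_t (transpose U *v X \<omega>) \<and>
      bayes_rule eta (X \<omega>) = bayes_rule eta_t (transpose U *v X \<omega>)"
    using regAE etaAE by eventually_elim (simp add: bayes_rule_def)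
  have pm: "{x \<in> space borel. eta x = eta_t (transpose U *v x) \<and> bayes_rule eta x = bayes_rule eta_t (transpose U *v x)} \<in> sets borel"
    unfolding bayes_rule_def by measurable
  have "AE x in distr M borel X. eta x = eta_t (transpose U *v x) \<and> bayes_rule eta x = bayes_rule eta_t (transpose U *v x)"
    using AE1 by (subst AE_distr_iff[OF Xm pm]) 
  then show "\<exists>eta_t f_t. eta_t \<in> borel_measurable (borel :: (real ^ 'k::{finite,linorder}) measure) \<and>
              f_t \<in> borel_measurable (borel :: (real ^ 'k::{finite,linorder}) measure) \<and>
              (AE x in distr M borel X.
                 eta x = eta_t (transpose (\<chi> r c. B $ r $ c / sqrt (lam c)) *v x) \<and>
                 bayes_rule eta x = f_t (transpose (\<chi> r c. B $ r $ c / sqrt (lam c)) *v x))"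
    using etam ftm unfolding U_def by blast
qed

end
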